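(* Let $n\geq2$ and let $\gamma(t)=(x(t),r(t))$ be a solution of the system $$\dot x=\cos\theta,\qquad \dot r=\sin\theta,\qquad \dot\theta=\frac{x}{2}\sin\theta+\Big(\frac{n-1}{r}-\frac{r}{2}\Big)\cos\theta$$ in $\{r>0\}$. Then neither of the functions $x(t)$ and $r(t)-\sqrt{2(n-1)}$ has a positive local minimum or a negative local maximum; in particular, each of these functions has different signs at successive critical points.
   Context: Here $t$ is Euclidean arc length and $\theta$ is the angle between $\dot\gamma$ and the $x$-axis. *)

theory Defs
  imports "HOL-Analysis.Analysis"
begin

definition is_local_min_on :: "(real \<Rightarrow> real) \<Rightarrow> real set \<Rightarrow> real \<Rightarrow> bool" where
  "is_local_min_on f I t \<longleftrightarrow> t \<in> I \<and> (\<exists>e>0. \<forall>s\<in>I. \<bar>s - t\<bar> < e \<longrightarrow> f t \<le> f s)"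

definition is_local_max_on :: "(real \<Rightarrow> real) \<Rightarrow> real set \<Rightarrow> real \<Rightarrow> bool" where
  "is_local_max_on f I t \<longleftrightarrow> t \<in> I \<and> (\<exists>e>0. \<forall>s\<in>I. \<bar>s - t\<bar> < e \<longrightarrow> f s \<le> f t)"

definition is_critical_point :: "(real \<Rightarrow> real) \<Rightarrow> real \<Rightarrow> bool" where
  "is_critical_point f t \<longleftrightarrow> (f has_real_derivative 0) (at t)"

definition successive_critical_points ::
  "(real \<Rightarrow> real) \<Rightarrow> real set \<Rightarrow> real \<Rightarrow> real \<Rightarrow> bool" where
  "successive_critical_points f I t1 t2 \<longleftrightarrow>
     t1 \<in> I \<and> t2 \<in> I \<and> t1 < t2 \<and> is_critical_point f t1 \<and> is_critical_point f t2 \<and>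
     (\<forall>s. t1 < s \<and> s < t2 \<longrightarrow> \<not> is_critical_point f s)"

end

theory Submission imports Defs begin

lemma gronwall_zero:
  fixes E E' :: "real \<Rightarrow> real" and K a b t :: real
  assumes ab: "a \<le> b"
    and dE: "\<And>s. a \<le> s \<Longrightarrow> s \<le> b \<Longrightarrow> (E has_real_derivative E' s) (at s)"
    and pos: "\<And>s. a \<le> s \<Longrightarrow> s \<le> b \<Longrightarrow> E s \<ge> 0"
    and bd: "\<And>s. a \<le> s \<Longrightarrow> s \<le> b \<Longrightarrow> \<bar>E' s\<bar> \<le> K * E s"
    and z: "E a = 0 \<or> E b = 0"
    and t: "a \<le> t" "t \<le> b"
  shows "E t = 0"
proof (cases "E a = 0")
  case True
  define h where "h s = E s * exp (- K * s)" for s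
  have "h t \<le> h a"
  proof (rule DERIV_nonpos_imp_nonincreasing[OF t(1)])
    fix s assume s: "a \<le> s" "s \<le> t"
    have "(h has_real_derivative (E' s - K * E s) * exp (- K * s)) (at s)"
      unfolding h_def using s t
      by (auto intro!: derivative_eq_intros dE simp: algebra_simps)
    moreover have "(E' s - K * E s) * exp (- K * s) \<le> 0"
      using bd[of s] s t by (intro mult_nonpos_nonneg) auto
    ultimately show "\<exists>y. (h has_real_derivative y) (at s) \<and> y \<le> 0" by blast
  qed
  moreover have "h a = 0" using True by (simp add: h_def)
  moreover have "h t \<ge> 0" using pos[OF t] by (simp add: h_def)
  ultimately show ?thesis by (simp add: h_def)
next
  case False
  then have Eb: "E b = 0" using z by simp
  define h where "h s = E s * exp (K * s)" for s
  have "h t \<le> h b"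
  proof (rule DERIV_nonneg_imp_nondecreasing[OF t(2)])
    fix s assume s: "t \<le> s" "s \<le> b"
    have "(h has_real_derivative (E' s + K * E s) * exp (K * s)) (at s)"
      unfolding h_def using s t
      by (auto intro!: derivative_eq_intros dE simp: algebra_simps)
    moreover have "(E' s + K * E s) * exp (K * s) \<ge> 0"
      using bd[of s] s t by (intro mult_nonneg_nonneg) auto
    ultimately show "\<exists>y. (h has_real_derivative y) (at s) \<and> y \<ge> 0" by blast
  qed
  moreover have "h b = 0" using Eb by (simp add: h_def)
  moreover have "h t \<ge> 0" using pos[OF t] by (simp add: h_def)
  ultimately show ?thesis by (simp add: h_def)
qed

locale osc =
  fixes I :: "real set" and f g a b :: "real \<Rightarrow> real"
  assumes opn: "open I" and ivl: "is_interval I"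
   and df: "\<And>t. t \<in> I \<Longrightarrow> (f has_real_derivative g t) (at t)"
   and dg: "\<And>t. t \<in> I \<Longrightarrow> (g has_real_derivative (a t * g t + b t * f t)) (at t)"
   and ca: "continuous_on I a" and cb: "continuous_on I b"
   and neg: "\<And>t. t \<in> I \<Longrightarrow> g t = 0 \<Longrightarrow> b t < 0"

lemma osc_neg: "osc I f g a b \<Longrightarrow> osc I (\<lambda>t. - f t) (\<lambda>t. - g t) a b"
  unfolding osc_def
proof (intro conjI allI impI; (elim conjE)?)
  fix t assume H: "open I" "is_interval I"
    "\<forall>t. t \<in> I \<longrightarrow> (f has_real_derivative g t) (at t)"
    "\<forall>t. t \<in> I \<longrightarrow> (g has_real_derivative a t * g t + b t * f t) (at t)"
    "continuous_on I a" "continuous_on I b" "\<forall>t. t \<in> I \<longrightarrow> g t = 0 \<longrightarrow> b t < 0"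
    and tI: "t \<in> I"
  show "((\<lambda>t. - f t) has_real_derivative - g t) (at t)"
    using DERIV_minus[OF H(3)[rule_format, OF tI]] .
  have "a t * - g t + b t * - f t = - (a t * g t + b t * f t)" by simp
  then show "((\<lambda>t. - g t) has_real_derivative a t * - g t + b t * - f t) (at t)"
    using DERIV_minus[OF H(4)[rule_format, OF tI]] by simp
qed auto

context osc
begin

lemma crit: "t \<in> I \<Longrightarrow> is_critical_point f t \<longleftrightarrow> g t = 0"
  unfolding is_critical_point_def using df DERIV_unique by metis

lemma contg: "t \<in> I \<Longrightarrow> isCont g t"
  using dg DERIV_isCont by blast

lemma sub: "s \<in> I \<Longrightarrow> u \<in> I \<Longrightarrow> s \<le> v \<Longrightarrow> v \<le> u \<Longrightarrow> v \<in> I"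
  using ivl unfolding is_interval_1 by blast

lemma no_pos_min: "\<not> (is_local_min_on f I t \<and> f t > 0)"
proof
  assume H: "is_local_min_on f I t \<and> f t > 0"
  then have tI: "t \<in> I" and ft: "f t > 0" unfolding is_local_min_on_def by auto
  from H obtain e where e: "e > 0" and emin: "\<forall>s\<in>I. \<bar>s - t\<bar> < e \<longrightarrow> f t \<le> f s"
    unfolding is_local_min_on_def by auto
  obtain e' where e': "e' > 0" "ball t e' \<subseteq> I" using opn tI openE by blast
  define d where "d = min e e'"
  have d0: "d > 0" using e e' by (simp add: d_def)
  have inI: "\<And>s. \<bar>s - t\<bar> < d \<Longrightarrow> s \<in> I"
    using e' by (auto simp: d_def dist_real_def subset_iff abs_minus_commute)
  have loc: "\<forall>y. \<bar>t - y\<bar> < d \<longrightarrow> f t \<le> f y"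
    using emin inI by (auto simp: d_def abs_minus_commute)
  have g0: "g t = 0" using DERIV_local_min[OF df[OF tI] d0 loc] .
  have "a t * g t + b t * f t < 0" using neg[OF tI g0] ft g0 by (simp add: mult_neg_pos)
  then obtain d2 where d2: "d2 > 0" "\<forall>h>0. h < d2 \<longrightarrow> g t > g (t + h)"
    using DERIV_neg_dec_right[OF dg[OF tI]] by blast
  define h where "h = min d d2 / 2"
  have h: "h > 0" "h < d" "h < d2" using d0 d2 by (auto simp: h_def)
  obtain z where z: "t < z" "z < t + h" "f (t + h) - f t = (t + h - t) * g z"
    using MVT2[of t "t + h" f g] h inI df by force
  have "g z < 0" using d2(2)[rule_format, of "z - t"] z h g0 by auto
  then have "h * g z < 0" using h(1) by (simp add: mult_pos_neg)
  then have "f (t + h) < f t" using z by simp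
  moreover have "f t \<le> f (t + h)" using loc h by auto
  ultimately show False by simp
qed

lemma no_neg_max: "\<not> (is_local_max_on f I t \<and> f t < 0)"
proof
  assume H: "is_local_max_on f I t \<and> f t < 0"
  interpret N: osc I "\<lambda>t. - f t" "\<lambda>t. - g t" a b by (rule osc_neg) (rule osc_axioms)
  have "is_local_min_on (\<lambda>t. - f t) I t \<and> - f t > 0"
    using H unfolding is_local_min_on_def is_local_max_on_def by auto
  then show False using N.no_pos_min by blast
qed


lemma not_both_pos:
  assumes t: "t1 < t2" "t1 \<in> I" "t2 \<in> I" and g1: "g t1 = 0" and g2: "g t2 = 0"
    and nz: "\<And>s. t1 < s \<Longrightarrow> s < t2 \<Longrightarrow> g s \<noteq> 0"
    and f1: "f t1 > 0" and f2: "f t2 > 0"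
  shows False
proof -
  have "a t1 * g t1 + b t1 * f t1 < 0" using neg[OF t(2) g1] f1 g1 by (simp add: mult_neg_pos)
  then obtain d1 where d1: "d1 > 0" "\<forall>h>0. h < d1 \<longrightarrow> g t1 > g (t1 + h)"
    using DERIV_neg_dec_right[OF dg[OF t(2)]] by blast
  have "a t2 * g t2 + b t2 * f t2 < 0" using neg[OF t(3) g2] f2 g2 by (simp add: mult_neg_pos)
  then obtain d2 where d2: "d2 > 0" "\<forall>h>0. h < d2 \<longrightarrow> g t2 < g (t2 - h)"
    using DERIV_neg_dec_left[OF dg[OF t(3)]] by blast
  define m where "m = (t2 - t1) / 2"
  define h1 where "h1 = min d1 m / 2"
  define h2 where "h2 = min d2 m / 2"
  have m: "m > 0" using t by (simp add: m_def)
  have h: "h1 > 0" "h1 < d1" "h2 > 0" "h2 < d2" "h1 < m" "h2 < m"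
    using d1 d2 m by (auto simp: h1_def h2_def)
  have gs1: "g (t1 + h1) < 0" using d1(2) h g1 by auto
  have gs2: "g (t2 - h2) > 0" using d2(2) h g2 by auto
  have le: "t1 + h1 \<le> t2 - h2" using h by (simp add: m_def)
  have cg: "\<forall>x. t1 + h1 \<le> x \<and> x \<le> t2 - h2 \<longrightarrow> isCont g x"
  proof (intro allI impI)
    fix x assume x: "t1 + h1 \<le> x \<and> x \<le> t2 - h2"
    have "t1 \<le> x" "x \<le> t2" using x h by linarith+
    then have "x \<in> I" using sub[OF t(2) t(3)] by blast
    then show "isCont g x" using contg by blast
  qed
  obtain z where z: "t1 + h1 \<le> z" "z \<le> t2 - h2" "g z = 0"
    using IVT[of g "t1 + h1" 0 "t2 - h2", OF less_imp_le[OF gs1] less_imp_le[OF gs2] le cg] by blast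
  have "t1 < z" "z < t2" using z h by linarith+
  then show False using nz z(3) by blast
qed

lemma nonzero:
  assumes t: "t1 < t2" "t1 \<in> I" "t2 \<in> I" and g1: "g t1 = 0" and g2: "g t2 = 0"
    and nz: "\<And>s. t1 < s \<Longrightarrow> s < t2 \<Longrightarrow> g s \<noteq> 0"
    and f0: "f t1 = 0 \<or> f t2 = 0"
  shows False
proof -
  have sI: "\<And>s. t1 \<le> s \<Longrightarrow> s \<le> t2 \<Longrightarrow> s \<in> I" using sub[OF t(2) t(3)] by blast
  have sub2: "{t1..t2} \<subseteq> I" using sI by auto
  have "continuous_on {t1..t2} a" using ca sub2 by (rule continuous_on_subset)
  then have "compact (a ` {t1..t2})" using compact_Icc by (rule compact_continuous_image)
  then have "bounded (a ` {t1..t2})" by (rule compact_imp_bounded)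
  then obtain Ma where Ma: "\<forall>y\<in>a ` {t1..t2}. norm y \<le> Ma"
    unfolding bounded_iff by blast
  have "continuous_on {t1..t2} b" using cb sub2 by (rule continuous_on_subset)
  then have "compact (b ` {t1..t2})" using compact_Icc by (rule compact_continuous_image)
  then have "bounded (b ` {t1..t2})" by (rule compact_imp_bounded)
  then obtain Mb where Mb: "\<forall>y\<in>b ` {t1..t2}. norm y \<le> Mb"
    unfolding bounded_iff by blast
  define M where "M = \<bar>Ma\<bar> + \<bar>Mb\<bar>"
  have aM: "\<bar>a s\<bar> \<le> M" if "t1 \<le> s" "s \<le> t2" for s
  proof -
    have "\<bar>a s\<bar> \<le> Ma" using Ma that by auto
    then show ?thesis unfolding M_def using abs_ge_self[of Ma] abs_ge_zero[of Mb] by linarith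
  qed
  have bM: "\<bar>b s\<bar> \<le> M" if "t1 \<le> s" "s \<le> t2" for s
  proof -
    have "\<bar>b s\<bar> \<le> Mb" using Mb that by auto
    then show ?thesis unfolding M_def using abs_ge_self[of Mb] abs_ge_zero[of Ma] by linarith
  qed
  have M0: "M \<ge> 0" by (simp add: M_def)
  define E where "E s = f s * f s + g s * g s" for s
  define E' where "E' s = 2 * f s * g s + 2 * g s * (a s * g s + b s * f s)" for s
  have dE: "(E has_real_derivative E' s) (at s)" if "t1 \<le> s" "s \<le> t2" for s
    unfolding E_def E'_def using sI[OF that]
    by (auto intro!: derivative_eq_intros df dg simp: algebra_simps)
  have Epos: "E s \<ge> 0" for s by (simp add: E_def)
  have bd: "\<bar>E' s\<bar> \<le> (1 + 3 * M) * E s" if s: "t1 \<le> s" "s \<le> t2" for s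
  proof -
    define u where "u = \<bar>f s\<bar>"
    define v where "v = \<bar>g s\<bar>"
    define A where "A = \<bar>a s\<bar>"
    define B where "B = \<bar>b s\<bar>"
    have Es: "E s = u * u + v * v" by (simp add: E_def u_def v_def abs_mult_self)
    have uv: "2 * u * v \<le> E s" using Es sum_squares_ge_zero[of "u - v" 0]
      by (simp add: algebra_simps power2_eq_square)
    have eq: "E' s = 2*(f s*g s) + 2*(a s*(g s*g s)) + b s * (2*(f s * g s))"
      by (simp add: E'_def algebra_simps)
    have "\<bar>E' s\<bar> \<le> \<bar>2*(f s*g s)\<bar> + \<bar>2*(a s*(g s*g s))\<bar> + \<bar>b s * (2*(f s * g s))\<bar>"
      unfolding eq using abs_triangle_ineq[of "2*(f s*g s)" "2*(a s*(g s*g s))"]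
        abs_triangle_ineq[of "2*(f s*g s) + 2*(a s*(g s*g s))" "b s * (2*(f s * g s))"]
      by linarith
    also have "\<dots> = 2 * u * v + 2 * A * (v * v) + B * (2 * u * v)"
      by (simp add: u_def v_def A_def B_def abs_mult)
    also have "\<dots> \<le> E s + 2 * M * E s + M * E s"
    proof -
      have "A * (v * v) \<le> M * E s"
        using aM[OF s] Es by (intro mult_mono) (auto simp: A_def v_def)
      moreover have "B * (2 * u * v) \<le> M * E s"
        using bM[OF s] uv by (intro mult_mono) (auto simp: B_def u_def v_def)
      ultimately show ?thesis using uv by linarith
    qed
    finally show ?thesis by (simp add: algebra_simps)
  qed
  have "E ((t1 + t2) / 2) = 0"
    by (rule gronwall_zero[of t1 t2 E E' "1 + 3 * M"]) (use t g1 g2 f0 dE Epos bd in \<open>auto simp: E_def\<close>)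
  then have "g ((t1 + t2) / 2) = 0" unfolding E_def
    by (metis add_nonneg_eq_0_iff mult_eq_0_iff zero_le_square)
  then show False using nz[of "(t1 + t2) / 2"] t by auto
qed

lemma successive:
  assumes "successive_critical_points f I t1 t2"
  shows "f t1 * f t2 < 0"
proof -
  from assms have t: "t1 < t2" "t1 \<in> I" "t2 \<in> I" and c1: "is_critical_point f t1"
    and c2: "is_critical_point f t2"
    and nc: "\<forall>s. t1 < s \<and> s < t2 \<longrightarrow> \<not> is_critical_point f s"
    unfolding successive_critical_points_def by auto
  have g1: "g t1 = 0" and g2: "g t2 = 0" using crit t c1 c2 by auto
  have nz: "g s \<noteq> 0" if "t1 < s" "s < t2" for s
    using nc that crit sub[OF t(2) t(3), of s] by auto
  interpret N: osc I "\<lambda>t. - f t" "\<lambda>t. - g t" a b by (rule osc_neg) (rule osc_axioms)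
  have "f t1 \<noteq> 0" "f t2 \<noteq> 0" using nonzero[OF t g1 g2 nz] by auto
  moreover have "\<not> (f t1 > 0 \<and> f t2 > 0)" using not_both_pos[OF t g1 g2 nz] by blast
  moreover have "\<not> (f t1 < 0 \<and> f t2 < 0)"
    using N.not_both_pos[OF t] g1 g2 nz by auto
  ultimately show ?thesis by (auto simp: mult_less_0_iff)
qed

lemma all3:
  "(\<forall>t. \<not> (is_local_min_on f I t \<and> f t > 0))
   \<and> (\<forall>t. \<not> (is_local_max_on f I t \<and> f t < 0))
   \<and> (\<forall>t1 t2. successive_critical_points f I t1 t2 \<longrightarrow> f t1 * f t2 < 0)"
  using no_pos_min no_neg_max successive by blast

end

theorem lemma8:
  fixes n :: nat and I :: "real set" and x r \<theta> :: "real \<Rightarrow> real"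
  assumes n: "n \<ge> 2"
    and I: "open I" "is_interval I" "I \<noteq> {}"
    and rpos: "\<And>t. t \<in> I \<Longrightarrow> r t > 0"
    and dx: "\<And>t. t \<in> I \<Longrightarrow> (x has_real_derivative cos (\<theta> t)) (at t)"
    and dr: "\<And>t. t \<in> I \<Longrightarrow> (r has_real_derivative sin (\<theta> t)) (at t)"
    and d\<theta>: "\<And>t. t \<in> I \<Longrightarrow> (\<theta> has_real_derivative
               (x t / 2 * sin (\<theta> t) + ((real n - 1) / r t - r t / 2) * cos (\<theta> t))) (at t)"
  shows "\<forall>f \<in> {x, \<lambda>t. r t - sqrt (2 * (real n - 1))}.
           (\<forall>t. \<not> (is_local_min_on f I t \<and> f t > 0))
         \<and> (\<forall>t. \<not> (is_local_max_on f I t \<and> f t < 0))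
         \<and> (\<forall>t1 t2. successive_critical_points f I t1 t2 \<longrightarrow> f t1 * f t2 < 0)"
proof -
  define R where "R = sqrt (2 * (real n - 1))"
  have R0: "R \<ge> 0" and R2: "R * R = 2 * (real n - 1)" using n by (auto simp: R_def)
  have cx: "isCont x t" if "t \<in> I" for t using dx[OF that] by (rule DERIV_isCont)
  have cr: "isCont r t" if "t \<in> I" for t using dr[OF that] by (rule DERIV_isCont)
  have c\<theta>: "isCont \<theta> t" if "t \<in> I" for t using d\<theta>[OF that] by (rule DERIV_isCont)
  have alg1: "\<And>c sn co X::real. - sn * (X / 2 * sn + c * co) = - c * sn * co + - (sn * sn) / 2 * X"
    by (simp add: algebra_simps)
  have alg2: "\<And>c sn co X D::real. co * (X / 2 * sn + (- c * D / (2 * r)) * co)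
       = X * co / 2 * sn + - (co * co) * c / (2 * r) * D" for r
    by (simp add: algebra_simps)
  have A: "osc I x (\<lambda>t. cos (\<theta> t)) (\<lambda>t. - ((real n - 1) / r t - r t / 2) * sin (\<theta> t))
      (\<lambda>t. - (sin (\<theta> t) * sin (\<theta> t)) / 2)"
  proof (unfold_locales)
    show "open I" "is_interval I" by (fact I)+
    fix t assume tI: "t \<in> I"
    show "(x has_real_derivative cos (\<theta> t)) (at t)" by (rule dx[OF tI])
    have "((\<lambda>t. cos (\<theta> t)) has_real_derivative - sin (\<theta> t) *
           (x t / 2 * sin (\<theta> t) + ((real n - 1) / r t - r t / 2) * cos (\<theta> t))) (at t)"
      using d\<theta>[OF tI] by (auto intro!: derivative_eq_intros)
    moreover have "- sin (\<theta> t) *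
           (x t / 2 * sin (\<theta> t) + ((real n - 1) / r t - r t / 2) * cos (\<theta> t))
         = - ((real n - 1) / r t - r t / 2) * sin (\<theta> t) * cos (\<theta> t)
           + - (sin (\<theta> t) * sin (\<theta> t)) / 2 * x t"
      using alg1 by blast
    ultimately show "((\<lambda>t. cos (\<theta> t)) has_real_derivative
           - ((real n - 1) / r t - r t / 2) * sin (\<theta> t) * cos (\<theta> t)
           + - (sin (\<theta> t) * sin (\<theta> t)) / 2 * x t) (at t)" by simp
  next
    fix t assume tI: "t \<in> I" and "cos (\<theta> t) = 0"
    then have "sin (\<theta> t) * sin (\<theta> t) = 1"
      using sin_cos_squared_add[of "\<theta> t"] by (simp add: power2_eq_square)
    then show "- (sin (\<theta> t) * sin (\<theta> t)) / 2 < 0" by simp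
  next
    show "continuous_on I (\<lambda>t. - ((real n - 1) / r t - r t / 2) * sin (\<theta> t))"
      using rpos cr c\<theta> by (intro continuous_at_imp_continuous_on ballI)
        (auto intro!: continuous_intros simp: less_imp_neq[symmetric])
    show "continuous_on I (\<lambda>t. - (sin (\<theta> t) * sin (\<theta> t)) / 2)"
      using c\<theta> by (intro continuous_at_imp_continuous_on ballI) (auto intro!: continuous_intros)
  qed
  have B: "osc I (\<lambda>t. r t - R) (\<lambda>t. sin (\<theta> t)) (\<lambda>t. x t * cos (\<theta> t) / 2)
      (\<lambda>t. - (cos (\<theta> t) * cos (\<theta> t)) * (r t + R) / (2 * r t))"
  proof (unfold_locales)
    show "open I" "is_interval I" by (fact I)+
    fix t assume tI: "t \<in> I"
    show "((\<lambda>t. r t - R) has_real_derivative sin (\<theta> t)) (at t)"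
      using dr[OF tI] by (auto intro!: derivative_eq_intros)
    have "((\<lambda>t. sin (\<theta> t)) has_real_derivative cos (\<theta> t) *
           (x t / 2 * sin (\<theta> t) + ((real n - 1) / r t - r t / 2) * cos (\<theta> t))) (at t)"
      using d\<theta>[OF tI] by (auto intro!: derivative_eq_intros)
    moreover have ceq: "(real n - 1) / r t - r t / 2 = - (r t + R) * (r t - R) / (2 * r t)"
      using rpos[OF tI] R2 by (simp add: field_simps)
    moreover have "cos (\<theta> t) *
           (x t / 2 * sin (\<theta> t) + (- (r t + R) * (r t - R) / (2 * r t)) * cos (\<theta> t))
         = x t * cos (\<theta> t) / 2 * sin (\<theta> t)
           + - (cos (\<theta> t) * cos (\<theta> t)) * (r t + R) / (2 * r t) * (r t - R)"
      using alg2 by blast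
    ultimately show "((\<lambda>t. sin (\<theta> t)) has_real_derivative
           x t * cos (\<theta> t) / 2 * sin (\<theta> t)
           + - (cos (\<theta> t) * cos (\<theta> t)) * (r t + R) / (2 * r t) * (r t - R)) (at t)" by simp
  next
    fix t assume tI: "t \<in> I" and "sin (\<theta> t) = 0"
    then have "cos (\<theta> t) * cos (\<theta> t) = 1"
      using sin_cos_squared_add[of "\<theta> t"] by (simp add: power2_eq_square)
    moreover have "(r t + R) / (2 * r t) > 0" using rpos[OF tI] R0 by simp
    ultimately show "- (cos (\<theta> t) * cos (\<theta> t)) * (r t + R) / (2 * r t) < 0" using rpos[OF tI] R0 by (simp add: field_simps)
  next
    show "continuous_on I (\<lambda>t. x t * cos (\<theta> t) / 2)"
      using cx c\<theta> by (intro continuous_at_imp_continuous_on ballI) (auto intro!: continuous_intros)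
    show "continuous_on I (\<lambda>t. - (cos (\<theta> t) * cos (\<theta> t)) * (r t + R) / (2 * r t))"
      using rpos cr c\<theta> by (intro continuous_at_imp_continuous_on ballI)
        (auto intro!: continuous_intros simp: less_imp_neq[symmetric])
  qed
  show ?thesis using osc.all3[OF A] osc.all3[OF B] unfolding R_def by simp
qed

end
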